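(* Let $\mathcal P$ be a Poisson $n$-Lie algebra. Then $\operatorname{Nil}(\mathcal P)$ is contained in every maximal hypo-nilpotent ideal of $\mathcal P$.
   Context: A Poisson $n$-Lie algebra is a commutative associative algebra $(\mathcal P,\cdot)$ with an $n$-linear skew-symmetric bracket satisfying the fundamental identity $[x_1,\dots,x_{n-1},[y_1,\dots,y_n]]=\sum_{i=1}^n[y_1,\dots,[x_1,\dots,x_{n-1},y_i],\dots,y_n]$ and the Leibniz rule $[y\cdot z,x_2,\dots,x_n]=y\cdot[z,x_2,\dots,x_n]+z\cdot[y,x_2,\dots,x_n]$. Products/brackets of subspaces are linear spans. For an ideal $\mathcal I$ (subspace with $\mathcal P\cdot\mathcal I\subseteq\mathcal I$, $[\mathcal I,\mathcal P,\dots,\mathcal P]\subseteq\mathcal I$): $\mathcal I^1=\mathcal I$, $\mathcal I^{k+1}=[\mathcal I^k,\mathcal I,\mathcal P,\dots,\mathcal P]+\mathcal I^k\cdot\mathcal I$, and $\mathcal I^{[1]}=\mathcal I$, $\mathcal I^{[k+1]}=[\mathcal I^{[k]},\mathcal I,\dots,\mathcal I]+\mathcal I^{[k]}\cdot\mathcal I$. $\mathcal I$ is a nilpotent ideal if $\mathcal I^s=0$ for some $s$, and nilpotent as a subalgebra if $\mathcal I^{[s]}=0$ for some $s$. $\operatorname{Nil}(\mathcal P)$ is the maximal nilpotent ideal of $\mathcal P$. A hypo-nilpotent ideal is an ideal that is nilpotent as a subalgebra but not nilpotent as an ideal; a maximal hypo-nilpotent ideal is one not properly contained in any other hypo-nilpotent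 ideal. *)

theory Defs
  imports Complex_Main
begin

text \<open>A Poisson n-Lie algebra over a field 'k: the carrier is the type 'a, a vector
space via scale, with a commutative associative (not necessarily unital) bilinear
product given by the comm_ring multiplication of 'a, and an n-ary bracket
br applied to lists of length n.\<close>

definition poisson_nlie ::
  "('k::field \<Rightarrow> 'a::comm_ring \<Rightarrow> 'a) \<Rightarrow> ('a list \<Rightarrow> 'a) \<Rightarrow> nat \<Rightarrow> bool" where
  "poisson_nlie scale br n \<longleftrightarrow>
     vector_space scale \<and>
     \<comment> \<open>product is bilinear (additivity comes from comm_ring)\<close>
     (\<forall>c x y. scale c (x * y) = scale c x * y) \<and>
     \<comment> \<open>bracket is n-linear\<close>
     (\<forall>xs i x y. length xs = n \<and> i < n \<longrightarrow>
        br (xs[i := x + y]) = br (xs[i := x]) + br (xs[i := y])) \<and>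
     (\<forall>xs i c x. length xs = n \<and> i < n \<longrightarrow>
        br (xs[i := scale c x]) = scale c (br (xs[i := x]))) \<and>
     \<comment> \<open>skew-symmetry: swapping two arguments changes the sign\<close>
     (\<forall>xs i j. length xs = n \<and> i < n \<and> j < n \<and> i \<noteq> j \<longrightarrow>
        br (xs[i := xs ! j, j := xs ! i]) = - br xs) \<and>
     \<comment> \<open>fundamental identity\<close>
     (\<forall>xs ys. length xs = n - 1 \<and> length ys = n \<longrightarrow>
        br (xs @ [br ys]) = (\<Sum>i<n. br (ys[i := br (xs @ [ys ! i])]))) \<and>
     \<comment> \<open>Leibniz rule\<close>
     (\<forall>y z xs. length xs = n - 1 \<longrightarrow>
        br ((y * z) # xs) = y * br (z # xs) + z * br (y # xs))"

definition sprod :: "('k::field \<Rightarrow> 'a::comm_ring \<Rightarrow> 'a) \<Rightarrow> 'a set \<Rightarrow> 'a set \<Rightarrow> 'a set" where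
  "sprod scale A B = module.span scale {x * y | x y. x \<in> A \<and> y \<in> B}"

definition sbr :: "('k::field \<Rightarrow> 'a::comm_ring \<Rightarrow> 'a) \<Rightarrow> ('a list \<Rightarrow> 'a) \<Rightarrow> 'a set list \<Rightarrow> 'a set" where
  "sbr scale br As = module.span scale
     {br xs | xs. length xs = length As \<and> (\<forall>i<length xs. xs ! i \<in> As ! i)}"

definition ssum :: "('k::field \<Rightarrow> 'a::comm_ring \<Rightarrow> 'a) \<Rightarrow> 'a set \<Rightarrow> 'a set \<Rightarrow> 'a set" where
  "ssum scale A B = module.span scale (A \<union> B)"

definition pideal :: "('k::field \<Rightarrow> 'a::comm_ring \<Rightarrow> 'a) \<Rightarrow> ('a list \<Rightarrow> 'a) \<Rightarrow> nat \<Rightarrow> 'a set \<Rightarrow> bool" where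
  "pideal scale br n I \<longleftrightarrow> module.subspace scale I \<and>
     (\<forall>p x. x \<in> I \<longrightarrow> p * x \<in> I) \<and>
     sbr scale br (I # replicate (n - 1) UNIV) \<subseteq> I"

text \<open>ideal_pow scale br n I k is I^(k+1):
  I^1 = I, I^(k+1) = [I^k, I, P, ..., P] + I^k . I\<close>
primrec ideal_pow :: "('k::field \<Rightarrow> 'a::comm_ring \<Rightarrow> 'a) \<Rightarrow> ('a list \<Rightarrow> 'a) \<Rightarrow> nat \<Rightarrow> 'a set \<Rightarrow> nat \<Rightarrow> 'a set" where
  "ideal_pow scale br n I 0 = I"
| "ideal_pow scale br n I (Suc k) =
     ssum scale (sbr scale br (ideal_pow scale br n I k # I # replicate (n - 2) UNIV))
                (sprod scale (ideal_pow scale br n I k) I)"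

text \<open>derived_pow scale br n I k is I^[k+1]:
  I^[1] = I, I^[k+1] = [I^[k], I, ..., I] + I^[k] . I\<close>
primrec derived_pow :: "('k::field \<Rightarrow> 'a::comm_ring \<Rightarrow> 'a) \<Rightarrow> ('a list \<Rightarrow> 'a) \<Rightarrow> nat \<Rightarrow> 'a set \<Rightarrow> nat \<Rightarrow> 'a set" where
  "derived_pow scale br n I 0 = I"
| "derived_pow scale br n I (Suc k) =
     ssum scale (sbr scale br (derived_pow scale br n I k # replicate (n - 1) I))
                (sprod scale (derived_pow scale br n I k) I)"

definition nilpotent_ideal :: "('k::field \<Rightarrow> 'a::comm_ring \<Rightarrow> 'a) \<Rightarrow> ('a list \<Rightarrow> 'a) \<Rightarrow> nat \<Rightarrow> 'a set \<Rightarrow> bool" where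
  "nilpotent_ideal scale br n I \<longleftrightarrow> pideal scale br n I \<and> (\<exists>s. ideal_pow scale br n I s = {0})"

definition nilpotent_subalg :: "('k::field \<Rightarrow> 'a::comm_ring \<Rightarrow> 'a) \<Rightarrow> ('a list \<Rightarrow> 'a) \<Rightarrow> nat \<Rightarrow> 'a set \<Rightarrow> bool" where
  "nilpotent_subalg scale br n I \<longleftrightarrow> (\<exists>s. derived_pow scale br n I s = {0})"

definition hypo_nilpotent :: "('k::field \<Rightarrow> 'a::comm_ring \<Rightarrow> 'a) \<Rightarrow> ('a list \<Rightarrow> 'a) \<Rightarrow> nat \<Rightarrow> 'a set \<Rightarrow> bool" where
  "hypo_nilpotent scale br n I \<longleftrightarrow> pideal scale br n I \<and> nilpotent_subalg scale br n I
     \<and> \<not> nilpotent_ideal scale br n I"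

definition max_hypo_nilpotent :: "('k::field \<Rightarrow> 'a::comm_ring \<Rightarrow> 'a) \<Rightarrow> ('a list \<Rightarrow> 'a) \<Rightarrow> nat \<Rightarrow> 'a set \<Rightarrow> bool" where
  "max_hypo_nilpotent scale br n I \<longleftrightarrow> hypo_nilpotent scale br n I \<and>
     (\<forall>J. hypo_nilpotent scale br n J \<and> I \<subseteq> J \<longrightarrow> J = I)"

definition is_Nil :: "('k::field \<Rightarrow> 'a::comm_ring \<Rightarrow> 'a) \<Rightarrow> ('a list \<Rightarrow> 'a) \<Rightarrow> nat \<Rightarrow> 'a set \<Rightarrow> bool" where
  "is_Nil scale br n N \<longleftrightarrow> nilpotent_ideal scale br n N \<and>
     (\<forall>I. nilpotent_ideal scale br n I \<longrightarrow> I \<subseteq> N)"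

end

theory Submission
  imports Defs
begin

locale pn = vs: vector_space scale
  for scale :: "'k::field \<Rightarrow> 'a::comm_ring \<Rightarrow> 'a" +
  fixes br :: "'a list \<Rightarrow> 'a" and n :: nat
  assumes n2: "n \<ge> 2" and P: "poisson_nlie scale br n"
begin

lemmas PC = P[unfolded poisson_nlie_def]

lemma mul_scale: "scale c (x * y) = scale c x * y"
  using PC[THEN conjunct2, THEN conjunct1] by simp

lemma br_add: "length xs = n \<Longrightarrow> i < n \<Longrightarrow> br (xs[i := x + y]) = br (xs[i := x]) + br (xs[i := y])"
  using PC[THEN conjunct2, THEN conjunct2, THEN conjunct1] by simp

lemma br_scale: "length xs = n \<Longrightarrow> i < n \<Longrightarrow> br (xs[i := scale c x]) = scale c (br (xs[i := x]))"
  using PC[THEN conjunct2, THEN conjunct2, THEN conjunct2, THEN conjunct1] by simp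

lemma br_skew: "length xs = n \<Longrightarrow> i < n \<Longrightarrow> j < n \<Longrightarrow> i \<noteq> j \<Longrightarrow>
        br (xs[i := xs ! j, j := xs ! i]) = - br xs"
  using PC[THEN conjunct2, THEN conjunct2, THEN conjunct2, THEN conjunct2, THEN conjunct1] by simp

lemma br_FI: "length xs = n - 1 \<Longrightarrow> length ys = n \<Longrightarrow>
        br (xs @ [br ys]) = (\<Sum>i<n. br (ys[i := br (xs @ [ys ! i])]))"
  using PC[THEN conjunct2, THEN conjunct2, THEN conjunct2, THEN conjunct2, THEN conjunct2, THEN conjunct1] by simp

lemma br_leib: "length xs = n - 1 \<Longrightarrow> br ((y * z) # xs) = y * br (z # xs) + z * br (y # xs)"
  using PC[THEN conjunct2, THEN conjunct2, THEN conjunct2, THEN conjunct2, THEN conjunct2, THEN conjunct2] by simp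

lemma br_zero: "length xs = n \<Longrightarrow> i < n \<Longrightarrow> br (xs[i := 0]) = 0"
  using br_scale[of xs i 0 0] by simp

lemma br_neg: "length xs = n \<Longrightarrow> i < n \<Longrightarrow> br (xs[i := - x]) = - br (xs[i := x])"
  using br_add[of xs i x "-x"] br_zero[of xs i] by (simp add: eq_neg_iff_add_eq_0 add.commute)

lemma br_diff: "length xs = n \<Longrightarrow> i < n \<Longrightarrow> br (xs[i := x - y]) = br (xs[i := x]) - br (xs[i := y])"
  using br_add[of xs i x "-y"] br_neg[of xs i y] by simp

lemma mul_scale_r: "p * scale c x = scale c (p * x)"
  by (metis mul_scale mult.commute)

lemma subspace_br_pos:
  assumes "vs.subspace T" "length xs = n" "i < n"
  shows "vs.subspace {x. br (xs[i := x]) \<in> T}"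
  unfolding vs.subspace_def
  using assms br_add[OF assms(2,3)] br_scale[OF assms(2,3)] br_zero[OF assms(2,3)]
  by (simp add: vs.subspace_0 vs.subspace_add vs.subspace_scale)

lemma subspace_br_first:
  assumes "vs.subspace T"
  shows "vs.subspace {x. \<forall>ys\<in>Y. length ys = n - 1 \<longrightarrow> br (x # ys) \<in> T}"
proof -
  have e: "x # ys = (0 # ys)[0 := x]" for x ys by simp
  have "vs.subspace (\<Inter>ys\<in>{ys\<in>Y. length ys = n - 1}. {x. br ((0#ys)[0 := x]) \<in> T})"
    apply (rule vs.subspace_Int)
    apply (rule subspace_br_pos[OF assms]) using n2 by auto
  moreover have "(\<Inter>ys\<in>{ys\<in>Y. length ys = n - 1}. {x. br ((0#ys)[0 := x]) \<in> T})
     = {x. \<forall>ys\<in>Y. length ys = n - 1 \<longrightarrow> br (x # ys) \<in> T}" by auto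
  ultimately show ?thesis by simp
qed

lemma subspace_mul:
  assumes "vs.subspace T"
  shows "vs.subspace {x. \<forall>z\<in>Z. x * z \<in> T}"
  unfolding vs.subspace_def using assms
  by (auto simp: vs.subspace_0 vs.subspace_add vs.subspace_scale distrib_right mul_scale[symmetric])

lemma subspace_lmul:
  assumes "vs.subspace T"
  shows "vs.subspace {x. \<forall>z\<in>Z. z * x \<in> T}"
  unfolding vs.subspace_def using assms
  by (auto simp: vs.subspace_0 vs.subspace_add vs.subspace_scale distrib_left mul_scale_r)

lemma br_move:
  assumes "length xs = n" "i < n" "j < n"
  shows "\<exists>zs. length zs = n \<and> zs ! j = xs ! i \<and> (\<forall>k<n. k \<noteq> i \<and> k \<noteq> j \<longrightarrow> zs ! k = xs ! k)
           \<and> (br xs = br zs \<or> br xs = - br zs)"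
proof (cases "i = j")
  case True then show ?thesis using assms by (intro exI[of _ xs]) auto
next
  case False
  let ?zs = "xs[i := xs ! j, j := xs ! i]"
  have "br ?zs = - br xs" using br_skew assms False by blast
  then show ?thesis using assms False by (intro exI[of _ ?zs]) auto
qed

lemma br_in_pos:
  assumes T: "vs.subspace T" and cl: "\<And>ys. length ys = n - 1 \<Longrightarrow> br (x # ys) \<in> T"
    and "length xs = n" "i < n" "xs ! i = x"
  shows "br xs \<in> T"
proof -
  obtain zs where z: "length zs = n" "zs ! 0 = x" "br xs = br zs \<or> br xs = - br zs"
    using br_move[OF assms(3,4), of 0] n2 assms(5) by auto
  have "zs = x # tl zs" using z n2 by (cases zs) auto
  then have "br zs \<in> T" using cl[of "tl zs"] z by (metis length_tl)
  then show ?thesis using z vs.subspace_neg[OF T] by auto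
qed

lemma br_to_last:
  assumes "length xs = n" "i < n"
  shows "\<exists>ws. length ws = n - 1 \<and> (br xs = br (ws @ [xs ! i]) \<or> br xs = - br (ws @ [xs ! i]))"
proof -
  obtain zs where z: "length zs = n" "zs ! (n-1) = xs ! i" "br xs = br zs \<or> br xs = - br zs"
    using br_move[OF assms, of "n-1"] n2 by auto
  have "take (Suc (n-1)) zs = take (n-1) zs @ [zs ! (n-1)]"
    by (rule take_Suc_conv_app_nth) (use z n2 in simp)
  then have e: "zs = take (n-1) zs @ [zs ! (n-1)]" using z n2 by simp
  have l: "length (take (n-1) zs) = n - 1" using z by simp
  show ?thesis using z e l by (intro exI[of _ "take (n-1) zs"]) metis
qed


definition "closed_br S \<longleftrightarrow> (\<forall>x\<in>S. \<forall>ys. length ys = n - 1 \<longrightarrow> br (x # ys) \<in> S)"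
definition "closed_mul S \<longleftrightarrow> (\<forall>p. \<forall>x\<in>S. p * x \<in> S)"
definition "idl S \<longleftrightarrow> vs.subspace S \<and> closed_mul S \<and> closed_br S"

lemma idl_UNIV: "idl UNIV" by (simp add: idl_def closed_br_def closed_mul_def)

lemma pideal_idl:
  assumes "pideal scale br n I" shows "idl I"
proof -
  have S: "vs.subspace I" and M: "\<forall>p x. x \<in> I \<longrightarrow> p * x \<in> I"
    and B: "sbr scale br (I # replicate (n - 1) UNIV) \<subseteq> I"
    using assms unfolding pideal_def by auto
  have "br (x # ys) \<in> I" if "x \<in> I" "length ys = n - 1" for x ys
  proof -
    have "br (x # ys) \<in> sbr scale br (I # replicate (n - 1) UNIV)"
      unfolding sbr_def
      apply (rule vs.span_base)
      using that by (auto simp: nth_Cons split: nat.splits)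
    then show ?thesis using B by blast
  qed
  then show ?thesis using S M unfolding idl_def closed_br_def closed_mul_def by auto
qed

lemma span_Un_span: "vs.span (vs.span X \<union> vs.span Y) = vs.span (X \<union> Y)"
  by (simp add: vs.span_Un vs.span_span)

lemma gen_eq:
  "ssum scale (sbr scale br (A # Ls)) (sprod scale A B) =
   vs.span ({br (y # ls) | y ls. y \<in> A \<and> length ls = length Ls \<and> (\<forall>i<length ls. ls ! i \<in> Ls ! i)}
            \<union> {y * z | y z. y \<in> A \<and> z \<in> B})"
proof -
  have "{br xs | xs. length xs = length (A # Ls) \<and> (\<forall>i<length xs. xs ! i \<in> (A # Ls) ! i)}
      = {br (y # ls) | y ls. y \<in> A \<and> length ls = length Ls \<and> (\<forall>i<length ls. ls ! i \<in> Ls ! i)}"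
  proof (intro equalityI subsetI)
    fix v assume "v \<in> {br xs | xs. length xs = length (A # Ls) \<and> (\<forall>i<length xs. xs ! i \<in> (A # Ls) ! i)}"
    then obtain xs where xs: "v = br xs" "length xs = length (A # Ls)" "\<forall>i<length xs. xs ! i \<in> (A # Ls) ! i"
      by blast
    then obtain y ls where yl: "xs = y # ls" by (cases xs) auto
    have a: "y \<in> A" using xs(3)[rule_format, of 0] yl by simp
    have b: "\<forall>i<length ls. ls ! i \<in> Ls ! i"
    proof (intro allI impI)
      fix i assume "i < length ls"
      then show "ls ! i \<in> Ls ! i" using xs(3)[rule_format, of "Suc i"] yl by simp
    qed
    have c: "length ls = length Ls" using xs(2) yl by simp
    show "v \<in> {br (y # ls) | y ls. y \<in> A \<and> length ls = length Ls \<and> (\<forall>i<length ls. ls ! i \<in> Ls ! i)}"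
      using xs(1) yl a b c by blast
  next
    fix v assume "v \<in> {br (y # ls) | y ls. y \<in> A \<and> length ls = length Ls \<and> (\<forall>i<length ls. ls ! i \<in> Ls ! i)}"
    then obtain y ls where "v = br (y # ls)" "y \<in> A" "length ls = length Ls" "\<forall>i<length ls. ls ! i \<in> Ls ! i"
      by blast
    then show "v \<in> {br xs | xs. length xs = length (A # Ls) \<and> (\<forall>i<length xs. xs ! i \<in> (A # Ls) ! i)}"
      by (intro CollectI exI[of _ "y # ls"]) (auto simp: nth_Cons split: nat.splits)
  qed
  then show ?thesis unfolding ssum_def sbr_def sprod_def span_Un_span by simp
qed

lemma seq_idl:
  assumes I: "idl I" and Ls: "length Ls = n - 1" "Ls ! 0 = I" "\<forall>L\<in>set Ls. L = I \<or> L = UNIV"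
    and X0: "X 0 = I" and XS: "\<And>k. X (Suc k) = ssum scale (sbr scale br (X k # Ls)) (sprod scale (X k) I)"
  shows "idl (X k)"
proof (induction k)
  case 0 then show ?case using I X0 by simp
next
  case (Suc k)
  have XkS: "vs.subspace (X k)" and XkM: "\<And>p x. x \<in> X k \<Longrightarrow> p * x \<in> X k"
    and XkB: "\<And>x ys. x \<in> X k \<Longrightarrow> length ys = n - 1 \<Longrightarrow> br (x # ys) \<in> X k"
    using Suc.IH unfolding idl_def closed_mul_def closed_br_def by auto
  have IS: "vs.subspace I" and IM: "\<And>p x. x \<in> I \<Longrightarrow> p * x \<in> I"
    and IB: "\<And>x ys. x \<in> I \<Longrightarrow> length ys = n - 1 \<Longrightarrow> br (x # ys) \<in> I"
    using I unfolding idl_def closed_mul_def closed_br_def by auto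
  define G1 where "G1 = {br (y # ls) | y ls. y \<in> X k \<and> length ls = length Ls \<and> (\<forall>i<length ls. ls ! i \<in> Ls ! i)}"
  define G2 where "G2 = {y * z | y z. y \<in> X k \<and> z \<in> I}"
  have XE: "X (Suc k) = vs.span (G1 \<union> G2)" unfolding XS gen_eq G1_def G2_def ..
  have g1: "br (y # ls) \<in> vs.span (G1 \<union> G2)" if "y \<in> X k" "length ls = n - 1" "\<forall>i<n - 1. ls ! i \<in> Ls ! i" for y ls
    apply (rule vs.span_base, rule UnI1) unfolding G1_def using that Ls
    by (intro CollectI exI[of _ y] exI[of _ ls]) auto
  have g2: "y * z \<in> vs.span (G1 \<union> G2)" if "y \<in> X k" "z \<in> I" for y z
    apply (rule vs.span_base, rule UnI2) unfolding G2_def using that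
    by (intro CollectI exI[of _ y] exI[of _ z]) auto
  have posI: "br xs \<in> I" if "length xs = n" "i < n" "xs ! i \<in> I" for xs i
    using br_in_pos[of I "xs ! i" xs i] IS IB that by blast
  have posX: "br xs \<in> X k" if "length xs = n" "i < n" "xs ! i \<in> X k" for xs i
    using br_in_pos[of "X k" "xs ! i" xs i] XkS XkB that by blast
  have n1: "n - 1 > 0" using n2 by simp
  have mulc: "p * x \<in> vs.span (G1 \<union> G2)" if x: "x \<in> vs.span (G1 \<union> G2)" for p x
  proof -
    have "x \<in> {x. \<forall>z\<in>{p}. z * x \<in> vs.span (G1 \<union> G2)}"
    proof (rule vs.span_subspace_induct[OF x subspace_lmul[OF vs.subspace_span]])
      fix g assume "g \<in> G1 \<union> G2"
      then show "g \<in> {x. \<forall>z\<in>{p}. z * x \<in> vs.span (G1 \<union> G2)}"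
      proof
        assume "g \<in> G1"
        then obtain y ls where g: "g = br (y # ls)" "y \<in> X k" "length ls = n - 1" "\<forall>i<n - 1. ls ! i \<in> Ls ! i"
          unfolding G1_def using Ls by auto
        have e: "p * g = br ((p * y) # ls) - y * br (p # ls)"
          using br_leib[OF g(3), of p y] g(1) by simp
        have "br (p # ls) \<in> I"
          apply (rule posI[of _ 1]) using g(3,4) n1 n2 Ls(2) by auto
        then show ?thesis using e g XkM
          by (simp add: vs.span_diff g1 g2)
      next
        assume "g \<in> G2"
        then obtain y z where g: "g = y * z" "y \<in> X k" "z \<in> I" unfolding G2_def by auto
        then show ?thesis using XkM g2 by (simp add: mult.assoc[symmetric])
      qed
    qed
    then show ?thesis by simp
  qed
  have brc: "br (x # ps) \<in> vs.span (G1 \<union> G2)" if x: "x \<in> vs.span (G1 \<union> G2)" "length ps = n - 1" for x ps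
  proof -
    have "x \<in> {x. \<forall>ys\<in>UNIV. length ys = n - 1 \<longrightarrow> br (x # ys) \<in> vs.span (G1 \<union> G2)}"
    proof (rule vs.span_subspace_induct[OF x(1) subspace_br_first[OF vs.subspace_span]])
      fix g assume "g \<in> G1 \<union> G2"
      then show "g \<in> {x. \<forall>ys\<in>UNIV. length ys = n - 1 \<longrightarrow> br (x # ys) \<in> vs.span (G1 \<union> G2)}"
      proof
        assume "g \<in> G2"
        then obtain y z where g: "g = y * z" "y \<in> X k" "z \<in> I" unfolding G2_def by auto
        show ?thesis
        proof (intro CollectI ballI impI)
          fix ys :: "'a list" assume l: "length ys = n - 1"
          have "br (g # ys) = y * br (z # ys) + br (y # ys) * z"
            using br_leib[OF l] g(1) by (simp add: mult.commute)
          then show "br (g # ys) \<in> vs.span (G1 \<union> G2)"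
            using g l IB XkB by (simp add: vs.span_add g2)
        qed
      next
        assume "g \<in> G1"
        then obtain y ls where g: "g = br (y # ls)" "y \<in> X k" "length ls = n - 1" "\<forall>i<n - 1. ls ! i \<in> Ls ! i"
          unfolding G1_def using Ls by auto
        show ?thesis
        proof (intro CollectI ballI impI)
          fix ys :: "'a list" assume l: "length ys = n - 1"
          obtain ws where ws: "length ws = n - 1" "br (g # ys) = br (ws @ [g]) \<or> br (g # ys) = - br (ws @ [g])"
            using br_to_last[of "g # ys" 0] l n2 by auto
          let ?ys = "y # ls"
          have ly: "length ?ys = n" using g n2 by simp
          have "br (ws @ [g]) = (\<Sum>i<n. br (?ys[i := br (ws @ [?ys ! i])]))"
            using br_FI[OF ws(1) ly] g(1) by simp
          also have "\<dots> \<in> vs.span (G1 \<union> G2)"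
          proof (rule vs.span_sum)
            fix i assume "i \<in> {..<n}"
            then have i: "i < n" by simp
            show "br (?ys[i := br (ws @ [?ys ! i])]) \<in> vs.span (G1 \<union> G2)"
            proof (cases i)
              case 0
              have "br (ws @ [y]) \<in> X k"
                apply (rule posX[of _ "n - 1"]) using ws g n2 by (auto simp: nth_append)
              then show ?thesis using 0 g1 g by simp
            next
              case (Suc j)
              have j: "j < n - 1" using i Suc by simp
              let ?v = "br (ws @ [ls ! j])"
              have "?v \<in> Ls ! j"
              proof -
                have "Ls ! j \<in> set Ls" using j Ls by simp
                then have "Ls ! j = I \<or> Ls ! j = UNIV" using Ls by blast
                moreover have "ls ! j \<in> Ls ! j" using g j by blast
                ultimately show ?thesis
                  using posI[of "ws @ [ls ! j]" "n - 1"] ws n2 by (auto simp: nth_append)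
              qed
              then have "\<forall>m<n - 1. ls[j := ?v] ! m \<in> Ls ! m"
                using g j by (auto simp: nth_list_update)
              then have "br (y # ls[j := ?v]) \<in> vs.span (G1 \<union> G2)"
                using g1 g by simp
              then show ?thesis using Suc by simp
            qed
          qed
          finally show "br (g # ys) \<in> vs.span (G1 \<union> G2)"
            using ws(2) vs.span_neg by auto
        qed
      qed
    qed
    then show ?thesis using x by simp
  qed
  show ?case unfolding idl_def closed_mul_def closed_br_def XE
    using mulc brc by auto
qed

lemma derived_idl:
  assumes "idl J" shows "idl (derived_pow scale br n J k)"
  apply (rule seq_idl[OF assms, of "replicate (n - 1) J"])
  using n2 by auto

lemma ipow_idl:
  assumes "idl N" shows "idl (ideal_pow scale br n N k)"
  apply (rule seq_idl[OF assms, of "N # replicate (n - 2) UNIV"])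
  using n2 by auto


lemma zero_step:
  assumes "length Ls = n - 1"
  shows "ssum scale (sbr scale br ({0} # Ls)) (sprod scale {0} B) = {0}"
proof -
  have "br (0 # ls) = 0" if "length ls = n - 1" for ls
    using br_zero[of "0 # ls" 0] that n2 by simp
  then have "vs.span ({br (y # ls) | y ls. y \<in> {0} \<and> length ls = length Ls \<and> (\<forall>i<length ls. ls ! i \<in> Ls ! i)}
            \<union> {y * z | y z. y \<in> {0} \<and> z \<in> B}) \<subseteq> {0}"
    using assms by (intro vs.span_minimal) auto
  then show ?thesis unfolding gen_eq using vs.span_zero by blast
qed

lemma derived_zero:
  assumes "derived_pow scale br n J s = {0}" shows "derived_pow scale br n J (s + d) = {0}"
  by (induction d) (use assms n2 zero_step in auto)

lemma ipow_zero:
  assumes "ideal_pow scale br n J s = {0}" shows "ideal_pow scale br n J (s + d) = {0}"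
  by (induction d) (use assms n2 zero_step[of "J # replicate (n - 2) UNIV"] in auto)

lemma sbr_mono:
  assumes "length As = length Bs" "\<forall>i<length As. As ! i \<subseteq> Bs ! i"
  shows "sbr scale br As \<subseteq> sbr scale br Bs"
  unfolding sbr_def
proof (intro vs.span_mono subsetI)
  fix v assume "v \<in> {br xs |xs. length xs = length As \<and> (\<forall>i<length xs. xs ! i \<in> As ! i)}"
  then obtain xs where xs: "v = br xs" "length xs = length As" "\<forall>i<length xs. xs ! i \<in> As ! i" by blast
  have "\<forall>i<length xs. xs ! i \<in> Bs ! i" using xs(2,3) assms(2) by auto
  then show "v \<in> {br xs |xs. length xs = length Bs \<and> (\<forall>i<length xs. xs ! i \<in> Bs ! i)}"
    using xs(1,2) assms(1) by auto
qed

lemma ipow_mono: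
  assumes "J \<subseteq> K" shows "ideal_pow scale br n J k \<subseteq> ideal_pow scale br n K k"
proof (induction k)
  case 0 then show ?case using assms by simp
next
  case (Suc k)
  have "sbr scale br (ideal_pow scale br n J k # J # replicate (n - 2) UNIV)
        \<subseteq> sbr scale br (ideal_pow scale br n K k # K # replicate (n - 2) UNIV)"
    apply (rule sbr_mono) using Suc assms by (auto simp: nth_Cons split: nat.splits)
  moreover have "sprod scale (ideal_pow scale br n J k) J \<subseteq> sprod scale (ideal_pow scale br n K k) K"
    unfolding sprod_def using Suc assms by (intro vs.span_mono) blast
  ultimately show ?case unfolding ssum_def ideal_pow.simps by (meson Un_mono vs.span_mono)
qed

lemma nil_sub:
  assumes "nilpotent_ideal scale br n K" "pideal scale br n J" "J \<subseteq> K"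
  shows "nilpotent_ideal scale br n J"
proof -
  obtain s where s: "ideal_pow scale br n K s = {0}" using assms(1) unfolding nilpotent_ideal_def by auto
  have "ideal_pow scale br n J s \<subseteq> {0}" using ipow_mono[OF assms(3), of s] s by simp
  moreover have "0 \<in> ideal_pow scale br n J s"
  proof (cases s)
    case 0 then show ?thesis using assms(2) vs.subspace_0 unfolding pideal_def by simp
  next
    case (Suc s') then show ?thesis by (simp add: ssum_def vs.span_zero)
  qed
  ultimately show ?thesis using assms(2) unfolding nilpotent_ideal_def by blast
qed

context
  fixes J N :: "'a set"
  assumes IJ: "idl J" and IN: "idl N"
begin

definition "AA a = (case a of 0 \<Rightarrow> UNIV | Suc a' \<Rightarrow> derived_pow scale br n J a')"
definition "BB t = (case t of 0 \<Rightarrow> UNIV | Suc t' \<Rightarrow> ideal_pow scale br n N t')"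
definition "SS c = vs.span (\<Union>a\<in>{..c}. AA a \<inter> BB (c - a))"
definition "KK = ssum scale J N"

lemma JS: "vs.subspace J" and JM: "\<And>p x. x \<in> J \<Longrightarrow> p * x \<in> J"
    and JB: "\<And>x ys. x \<in> J \<Longrightarrow> length ys = n - 1 \<Longrightarrow> br (x # ys) \<in> J"
  using IJ unfolding idl_def closed_mul_def closed_br_def by auto

lemma NS: "vs.subspace N" and NM: "\<And>p x. x \<in> N \<Longrightarrow> p * x \<in> N"
    and NB: "\<And>x ys. x \<in> N \<Longrightarrow> length ys = n - 1 \<Longrightarrow> br (x # ys) \<in> N"
  using IN unfolding idl_def closed_mul_def closed_br_def by auto

lemma AA_idl: "idl (AA a)"
  by (cases a) (auto simp: AA_def idl_UNIV derived_idl[OF IJ])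

lemma BB_idl: "idl (BB a)"
  by (cases a) (auto simp: BB_def idl_UNIV ipow_idl[OF IN])

lemma A_br:
  assumes "x \<in> AA a" "length zs = n - 1" "\<forall>i<n - 1. zs ! i \<in> J"
  shows "br (x # zs) \<in> AA (Suc a)"
proof (cases a)
  case 0
  have "zs ! 0 \<in> J" using assms n2 by auto
  then have "br (x # zs) \<in> J"
    using br_in_pos[of J "zs ! 0" "x # zs" 1] JS JB assms n2 by auto
  then show ?thesis using 0 by (simp add: AA_def)
next
  case (Suc a')
  have "br (x # zs) \<in> derived_pow scale br n J (Suc a')"
    unfolding derived_pow.simps gen_eq
    apply (rule vs.span_base, rule UnI1)
    using assms Suc by (intro CollectI exI[of _ x] exI[of _ zs]) (auto simp: AA_def)
  then show ?thesis using Suc by (simp add: AA_def)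
qed

lemma A_mul:
  assumes "x \<in> AA a" "z \<in> J"
  shows "x * z \<in> AA (Suc a)"
proof (cases a)
  case 0
  then show ?thesis using JM assms by (simp add: AA_def)
next
  case (Suc a')
  have "x * z \<in> derived_pow scale br n J (Suc a')"
    unfolding derived_pow.simps gen_eq
    apply (rule vs.span_base, rule UnI2)
    using assms Suc by (intro CollectI exI[of _ x] exI[of _ z]) (auto simp: AA_def)
  then show ?thesis using Suc by (simp add: AA_def)
qed

lemma B_br:
  assumes "x \<in> BB t" "length zs = n - 1" "i < n - 1" "zs ! i \<in> N"
  shows "br (x # zs) \<in> BB (Suc t)"
proof (cases t)
  case 0
  have "br (x # zs) \<in> N"
    using br_in_pos[of N "zs ! i" "x # zs" "Suc i"] NS NB assms n2 by auto
  then show ?thesis using 0 by (simp add: BB_def)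
next
  case (Suc t')
  let ?D = "ideal_pow scale br n N (Suc t')"
  have DS: "vs.subspace ?D" using ipow_idl[OF IN] unfolding idl_def by blast
  obtain ws where ws: "length ws = n" "ws ! 1 = (x # zs) ! Suc i"
     "\<forall>k<n. k \<noteq> Suc i \<and> k \<noteq> 1 \<longrightarrow> ws ! k = (x # zs) ! k"
     "br (x # zs) = br ws \<or> br (x # zs) = - br ws"
    using br_move[OF _ _ _, of "x # zs" "Suc i" 1] assms n2 by (metis Suc_less_eq Suc_pred' length_Cons less_le_trans order.strict_trans1 pos2 Suc_1 Suc_le_lessD)
  have w0: "ws ! 0 = x" using ws(3) n2 by auto
  obtain m rest where wr: "ws = x # m # rest"
    using ws(1) w0 n2 by (cases ws; cases "tl ws") auto
  have "br ws \<in> ?D"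
    unfolding ideal_pow.simps gen_eq
    apply (rule vs.span_base, rule UnI1)
    using assms Suc wr ws n2
    by (intro CollectI exI[of _ x] exI[of _ "m # rest"]) (auto simp: BB_def nth_Cons split: nat.splits)
  then have "br (x # zs) \<in> ?D" using ws(4) vs.subspace_neg[OF DS] by auto
  then show ?thesis using Suc by (simp add: BB_def)
qed

lemma B_mul:
  assumes "x \<in> BB t" "z \<in> N"
  shows "x * z \<in> BB (Suc t)"
proof (cases t)
  case 0
  then show ?thesis using NM assms by (simp add: BB_def)
next
  case (Suc t')
  have "x * z \<in> ideal_pow scale br n N (Suc t')"
    unfolding ideal_pow.simps gen_eq
    apply (rule vs.span_base, rule UnI2)
    using assms Suc by (intro CollectI exI[of _ x] exI[of _ z]) (auto simp: BB_def)
  then show ?thesis using Suc by (simp add: BB_def)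
qed

lemma S_mem: "x \<in> AA a \<Longrightarrow> x \<in> BB t \<Longrightarrow> a + t = c \<Longrightarrow> x \<in> SS c"
  unfolding SS_def by (rule vs.span_base) force

lemma KK_eq: "KK = {a + b | a b. a \<in> J \<and> b \<in> N}"
proof -
  have sp: "vs.span J = J" "vs.span N = N" using JS NS vs.span_eq_iff by auto
  show ?thesis unfolding KK_def ssum_def vs.span_Un sp by simp
qed

lemma expand:
  assumes T: "vs.subspace T"
    and base: "\<And>zs. length zs = n - 1 \<Longrightarrow> \<forall>i<n - 1. zs ! i \<in> J \<union> N \<Longrightarrow> br (x # zs) \<in> T"
    and ys: "length ys = n - 1" "\<forall>i<n - 1. ys ! i \<in> KK"
  shows "br (x # ys) \<in> T"
proof -
  have "\<forall>ys. length ys = n - 1 \<and> (\<forall>i<n - 1. ys ! i \<in> KK) \<and> (\<forall>i. k \<le> i \<and> i < n - 1 \<longrightarrow> ys ! i \<in> J \<union> N)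
      \<longrightarrow> br (x # ys) \<in> T" for k
  proof (induction k)
    case 0 then show ?case using base by auto
  next
    case (Suc k)
    show ?case
    proof (intro allI impI, elim conjE)
      fix ys :: "'a list" assume l: "length ys = n - 1" and yK: "\<forall>i<n - 1. ys ! i \<in> KK"
        and yr: "\<forall>i. Suc k \<le> i \<and> i < n - 1 \<longrightarrow> ys ! i \<in> J \<union> N"
      show "br (x # ys) \<in> T"
      proof (cases "k < n - 1")
        case False
        then have "\<forall>i. k \<le> i \<and> i < n - 1 \<longrightarrow> ys ! i \<in> J \<union> N" by auto
        then show ?thesis using Suc.IH l yK by blast
      next
        case True
        have "ys ! k \<in> KK" using yK True by blast
        then obtain a b where ab: "ys ! k = a + b" "a \<in> J" "b \<in> N" unfolding KK_eq by blast
        have e: "(x # ys)[Suc k := a + b] = x # ys" by (simp add: ab(1)[symmetric])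
        have sumeq: "br ((x # ys)[Suc k := a + b]) = br ((x # ys)[Suc k := a]) + br ((x # ys)[Suc k := b])"
          using br_add[of "x # ys" "Suc k" a b] l True n2 by simp
        have aK: "a \<in> KK" unfolding KK_eq using ab(2) vs.subspace_0[OF NS]
          by (intro CollectI exI[of _ a] exI[of _ 0]) simp
        have bK: "b \<in> KK" unfolding KK_eq using ab(3) vs.subspace_0[OF JS]
          by (intro CollectI exI[of _ 0] exI[of _ b]) simp
        have gen: "br (x # ys[k := v]) \<in> T" if v: "v \<in> KK" "v \<in> J \<union> N" for v
        proof -
          have "length (ys[k := v]) = n - 1" using l by simp
          moreover have "\<forall>i<n - 1. ys[k := v] ! i \<in> KK"
          proof (intro allI impI)
            fix i assume i: "i < n - 1"
            show "ys[k := v] ! i \<in> KK"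
            proof (cases "i = k")
              case True then show ?thesis using v l i by simp
            next
              case False then show ?thesis using yK i by simp
            qed
          qed
          moreover have "\<forall>i. k \<le> i \<and> i < n - 1 \<longrightarrow> ys[k := v] ! i \<in> J \<union> N"
          proof (intro allI impI)
            fix i assume i: "k \<le> i \<and> i < n - 1"
            show "ys[k := v] ! i \<in> J \<union> N"
            proof (cases "i = k")
              case True then show ?thesis using v l i by simp
            next
              case False then show ?thesis using yr i by simp
            qed
          qed
          ultimately show ?thesis using Suc.IH[rule_format, of "ys[k := v]"] by blast
        qed
        have "br ((x # ys)[Suc k := a]) \<in> T" using gen[OF aK] ab by simp
        moreover have "br ((x # ys)[Suc k := b]) \<in> T" using gen[OF bK] ab by simp
        moreover have "br (x # ys) = br ((x # ys)[Suc k := a]) + br ((x # ys)[Suc k := b])"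
          using sumeq e by simp
        ultimately show ?thesis using vs.subspace_add[OF T] by simp
      qed
    qed
  qed
  from this[of "n - 1"] show ?thesis using ys by auto
qed


lemma SS_sub: "vs.subspace (SS c)" unfolding SS_def by simp

lemma G1:
  assumes x: "x \<in> SS c" and ys: "length ys = n - 1" "\<forall>i<n - 1. ys ! i \<in> KK"
  shows "br (x # ys) \<in> SS (Suc c)"
proof -
  have "x \<in> {x. \<forall>ys\<in>{ys. \<forall>i<n - 1. ys ! i \<in> KK}. length ys = n - 1 \<longrightarrow> br (x # ys) \<in> SS (Suc c)}"
  proof (rule vs.span_subspace_induct[OF x[unfolded SS_def] subspace_br_first[OF SS_sub]])
    fix g assume "g \<in> (\<Union>a\<in>{..c}. AA a \<inter> BB (c - a))"
    then obtain a where a: "a \<le> c" "g \<in> AA a" "g \<in> BB (c - a)" by auto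
    show "g \<in> {x. \<forall>ys\<in>{ys. \<forall>i<n - 1. ys ! i \<in> KK}. length ys = n - 1 \<longrightarrow> br (x # ys) \<in> SS (Suc c)}"
    proof (intro CollectI ballI impI)
      fix ys :: "'a list" assume yK: "ys \<in> {ys. \<forall>i<n - 1. ys ! i \<in> KK}" and yl: "length ys = n - 1"
      show "br (g # ys) \<in> SS (Suc c)"
      proof (rule expand[OF SS_sub])
        fix zs :: "'a list" assume zs: "length zs = n - 1" "\<forall>i<n - 1. zs ! i \<in> J \<union> N"
        show "br (g # zs) \<in> SS (Suc c)"
        proof (cases "\<forall>i<n - 1. zs ! i \<in> J")
          case True
          have "br (g # zs) \<in> AA (Suc a)" by (rule A_br[OF a(2) zs(1) True])
          moreover have "br (g # zs) \<in> BB (c - a)"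
            using BB_idl[of "c - a"] a(3) zs(1) unfolding idl_def closed_br_def by blast
          ultimately show ?thesis using S_mem[of _ "Suc a" "c - a" "Suc c"] a(1) by simp
        next
          case False
          then obtain i where i: "i < n - 1" "zs ! i \<notin> J" by auto
          then have iN: "zs ! i \<in> N" using zs by auto
          have "br (g # zs) \<in> BB (Suc (c - a))" by (rule B_br[OF a(3) zs(1) i(1) iN])
          moreover have "br (g # zs) \<in> AA a"
            using AA_idl[of a] a(2) zs(1) unfolding idl_def closed_br_def by blast
          ultimately show ?thesis using S_mem[of _ a "Suc (c - a)" "Suc c"] a(1) by simp
        qed
      qed (use yK yl in auto)
    qed
  qed
  then show ?thesis using ys by auto
qed

lemma G2:
  assumes x: "x \<in> SS c" and z: "z \<in> KK"
  shows "x * z \<in> SS (Suc c)"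
proof -
  have "z \<in> {a + b | a b. a \<in> J \<and> b \<in> N}" using z KK_eq by simp
  then obtain j m where jm: "z = j + m" "j \<in> J" "m \<in> N" by blast
  have "x \<in> {x. \<forall>z\<in>{z}. x * z \<in> SS (Suc c)}"
  proof (rule vs.span_subspace_induct[OF x[unfolded SS_def] subspace_mul[OF SS_sub]])
    fix g assume "g \<in> (\<Union>a\<in>{..c}. AA a \<inter> BB (c - a))"
    then obtain a where a: "a \<le> c" "g \<in> AA a" "g \<in> BB (c - a)" by auto
    have BM: "\<And>t p x. x \<in> BB t \<Longrightarrow> p * x \<in> BB t"
      using BB_idl unfolding idl_def closed_mul_def by blast
    have AM: "\<And>t p x. x \<in> AA t \<Longrightarrow> p * x \<in> AA t"
      using AA_idl unfolding idl_def closed_mul_def by blast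
    have "g * j \<in> AA (Suc a)" by (rule A_mul[OF a(2) jm(2)])
    moreover have "g * j \<in> BB (c - a)" using BM[OF a(3), of j] by (simp add: mult.commute)
    ultimately have 1: "g * j \<in> SS (Suc c)" using S_mem[of _ "Suc a" "c - a" "Suc c"] a(1) by simp
    have "g * m \<in> BB (Suc (c - a))" by (rule B_mul[OF a(3) jm(3)])
    moreover have "g * m \<in> AA a" using AM[OF a(2), of m] by (simp add: mult.commute)
    ultimately have 2: "g * m \<in> SS (Suc c)" using S_mem[of _ a "Suc (c - a)" "Suc c"] a(1) by simp
    have "g * z = g * j + g * m" using jm(1) by (simp add: distrib_left)
    then show "g \<in> {x. \<forall>z\<in>{z}. x * z \<in> SS (Suc c)}"
      using 1 2 vs.subspace_add[OF SS_sub] by simp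
  qed
  then show ?thesis by simp
qed

lemma DK_sub: "derived_pow scale br n KK k \<subseteq> SS (Suc k)"
proof (induction k)
  case 0
  have "J \<union> N \<subseteq> SS 1"
  proof
    fix x assume "x \<in> J \<union> N"
    then show "x \<in> SS 1"
    proof
      assume "x \<in> J" then show ?thesis using S_mem[of x 1 0 1] by (simp add: AA_def BB_def)
    next
      assume "x \<in> N" then show ?thesis using S_mem[of x 0 1 1] by (simp add: AA_def BB_def)
    qed
  qed
  then show ?case unfolding derived_pow.simps KK_def ssum_def
    by (intro vs.span_minimal[OF _ SS_sub]) simp
next
  case (Suc k)
  show ?case unfolding derived_pow.simps gen_eq
  proof (intro vs.span_minimal[OF _ SS_sub] subsetI)
    fix v assume "v \<in> {br (y # ls) |y ls. y \<in> derived_pow scale br n KK k \<and> length ls = length (replicate (n - 1) KK) \<and>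
              (\<forall>i<length ls. ls ! i \<in> replicate (n - 1) KK ! i)} \<union>
          {y * z |y z. y \<in> derived_pow scale br n KK k \<and> z \<in> KK}"
    then show "v \<in> SS (Suc (Suc k))"
    proof
      assume "v \<in> {br (y # ls) |y ls. y \<in> derived_pow scale br n KK k \<and> length ls = length (replicate (n - 1) KK) \<and>
              (\<forall>i<length ls. ls ! i \<in> replicate (n - 1) KK ! i)}"
      then obtain y ls where v: "v = br (y # ls)" "y \<in> derived_pow scale br n KK k" "length ls = n - 1"
          "\<forall>i<n - 1. ls ! i \<in> KK" by auto
      then show ?thesis using G1[of y "Suc k" ls] Suc by auto
    next
      assume "v \<in> {y * z |y z. y \<in> derived_pow scale br n KK k \<and> z \<in> KK}"
      then obtain y z where v: "v = y * z" "y \<in> derived_pow scale br n KK k" "z \<in> KK" by auto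
      then show ?thesis using G2[of y "Suc k" z] Suc by auto
    qed
  qed
qed

lemma KK_nil_subalg:
  assumes "derived_pow scale br n J s = {0}" "ideal_pow scale br n N r = {0}"
  shows "nilpotent_subalg scale br n KK"
proof -
  have A0: "AA a = {0}" if ge: "a \<ge> Suc s" for a
  proof -
    obtain a' where a': "a = Suc a'" using ge by (cases a) auto
    have "AA a = derived_pow scale br n J (s + (a' - s))" using a' ge by (simp add: AA_def)
    then show ?thesis using derived_zero[OF assms(1)] by simp
  qed
  have B0: "BB t = {0}" if ge: "t \<ge> Suc r" for t
  proof -
    obtain t' where t': "t = Suc t'" using ge by (cases t) auto
    have "BB t = ideal_pow scale br n N (r + (t' - r))" using t' ge by (simp add: BB_def)
    then show ?thesis using ipow_zero[OF assms(2)] by simp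
  qed
  let ?c = "Suc (Suc (s + r))"
  have "(\<Union>a\<in>{..?c}. AA a \<inter> BB (?c - a)) \<subseteq> {0}"
  proof
    fix x assume "x \<in> (\<Union>a\<in>{..?c}. AA a \<inter> BB (?c - a))"
    then obtain a where a: "a \<le> ?c" "x \<in> AA a" "x \<in> BB (?c - a)" by auto
    show "x \<in> {0}"
    proof (cases "a \<ge> Suc s")
      case True then show ?thesis using A0 a by auto
    next
      case False then have "?c - a \<ge> Suc r" by simp
      then show ?thesis using B0 a by auto
    qed
  qed
  then have "SS ?c \<subseteq> {0}" unfolding SS_def by (intro vs.span_minimal) auto
  then have "derived_pow scale br n KK (Suc (s + r)) \<subseteq> {0}" using DK_sub[of "Suc (s + r)"] by simp
  moreover have "0 \<in> derived_pow scale br n KK (Suc (s + r))"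
    by (simp add: ssum_def vs.span_zero)
  ultimately show ?thesis unfolding nilpotent_subalg_def by blast
qed

lemma KK_pideal: "pideal scale br n KK"
proof -
  have S: "vs.subspace KK" unfolding KK_def ssum_def by simp
  have M: "p * x \<in> KK" if xK: "x \<in> KK" for p x
  proof -
    have "x \<in> {a + b | a b. a \<in> J \<and> b \<in> N}" using xK KK_eq by simp
    then obtain a b where ab: "x = a + b" "a \<in> J" "b \<in> N" by blast
    have "p * x = p * a + p * b" using ab(1) by (simp add: distrib_left)
    then show ?thesis unfolding KK_eq using JM[OF ab(2)] NM[OF ab(3)] by blast
  qed
  have B: "br xs \<in> KK" if xl: "length xs = n" and x0: "xs ! 0 \<in> KK" for xs
  proof -
    have "xs ! 0 \<in> {a + b | a b. a \<in> J \<and> b \<in> N}" using x0 KK_eq by simp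
    then obtain a b where ab: "xs ! 0 = a + b" "a \<in> J" "b \<in> N" by blast
    obtain y ys where xs: "xs = y # ys" using xl n2 by (cases xs) auto
    have lt: "length ys = n - 1" using xl xs by simp
    have y: "y = a + b" using ab(1) xs by simp
    have "br ((a + b) # ys) = br (a # ys) + br (b # ys)"
      using br_add[of "0 # ys" 0 a b] lt n2 by simp
    then have "br xs = br (a # ys) + br (b # ys)" using xs y by simp
    then show ?thesis unfolding KK_eq using JB[OF ab(2) lt] NB[OF ab(3) lt] by blast
  qed
  have "sbr scale br (KK # replicate (n - 1) UNIV) \<subseteq> KK"
    unfolding sbr_def
  proof (intro vs.span_minimal[OF _ S] subsetI)
    fix v assume "v \<in> {br xs |xs. length xs = length (KK # replicate (n - 1) UNIV) \<and>
                (\<forall>i<length xs. xs ! i \<in> (KK # replicate (n - 1) UNIV) ! i)}"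
    then obtain xs where xs: "v = br xs" "length xs = length (KK # replicate (n - 1) UNIV)"
      "\<forall>i<length xs. xs ! i \<in> (KK # replicate (n - 1) UNIV) ! i" by blast
    have l: "length xs = n" using xs(2) n2 by simp
    have "0 < length xs" using l n2 by simp
    then have "xs ! 0 \<in> (KK # replicate (n - 1) UNIV) ! 0" using xs(3) by blast
    then have "xs ! 0 \<in> KK" by simp
    then show "v \<in> KK" using B[OF l] xs(1) by simp
  qed
  then show ?thesis unfolding pideal_def using S M by blast
qed

lemma J_KK: "J \<subseteq> KK" and N_KK: "N \<subseteq> KK"
  unfolding KK_def ssum_def using vs.span_superset[of "J \<union> N"] by auto

end

end

theorem proposition5p15:
  fixes scale :: "'k::field \<Rightarrow> 'a::comm_ring \<Rightarrow> 'a"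
    and br :: "'a list \<Rightarrow> 'a" and n :: nat and N J :: "'a set"
  assumes "n \<ge> 2"
    and "poisson_nlie scale br n"
    and "is_Nil scale br n N"
    and "max_hypo_nilpotent scale br n J"
  shows "N \<subseteq> J"
proof -
  have vs: "vector_space scale" using assms(2) unfolding poisson_nlie_def by (rule conjunct1)
  have pn: "pn scale br n" unfolding pn_def pn_axioms_def using vs assms(1,2) by blast
  have hJ: "hypo_nilpotent scale br n J" and mx: "\<And>J'. hypo_nilpotent scale br n J' \<Longrightarrow> J \<subseteq> J' \<Longrightarrow> J' = J"
    using assms(4) unfolding max_hypo_nilpotent_def by auto
  have pJ: "pideal scale br n J" and sJ: "nilpotent_subalg scale br n J" and nJ: "\<not> nilpotent_ideal scale br n J"
    using hJ unfolding hypo_nilpotent_def by auto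
  have nN: "nilpotent_ideal scale br n N" using assms(3) unfolding is_Nil_def by auto
  then have pN: "pideal scale br n N" unfolding nilpotent_ideal_def by auto
  obtain s where s: "derived_pow scale br n J s = {0}" using sJ unfolding nilpotent_subalg_def by auto
  obtain r where r: "ideal_pow scale br n N r = {0}" using nN unfolding nilpotent_ideal_def by auto
  have iJ: "pn.idl scale br n J" by (rule pn.pideal_idl[OF pn pJ])
  have iN: "pn.idl scale br n N" by (rule pn.pideal_idl[OF pn pN])
  let ?K = "pn.KK scale J N"
  have pK: "pideal scale br n ?K" by (rule pn.KK_pideal[OF pn iJ iN])
  have sK: "nilpotent_subalg scale br n ?K" by (rule pn.KK_nil_subalg[OF pn iJ iN s r])
  have JK: "J \<subseteq> ?K" by (rule pn.J_KK[OF pn iJ iN])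
  have NK: "N \<subseteq> ?K" by (rule pn.N_KK[OF pn iJ iN])
  have "\<not> nilpotent_ideal scale br n ?K" using pn.nil_sub[OF pn _ pJ JK] nJ by blast
  then have "hypo_nilpotent scale br n ?K" using pK sK unfolding hypo_nilpotent_def by blast
  then have "?K = J" using mx JK by blast
  then show ?thesis using NK by simp
qed

thm_deps proposition5p15

end
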